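(* (Postponement of parallel $\bot$-reduction.) For all $s,t\in\Lambda^\infty$: if $s\to^\infty_{\beta\bot}t$ then there exists $r\in\Lambda^\infty$ such that $s\to^\infty_\beta r$ and $r\Rightarrow_\bot t$.
   Context: Fix an infinite set $V$ of variables and a set $C$ of constants with $V\cap C=\emptyset$, containing a distinguished constant $\bot$. $\Lambda^\infty$ is the set of infinitary lambda-terms: all finite and infinite terms generated coinductively by $t ::= c \mid x \mid t\,t \mid \lambda x.t$, identified up to $\alpha$-equivalence (fresh variables are assumed always available). $s[t/x]$ is capture-avoiding substitution, $\equiv$ identity of terms, an atom is a variable or constant. For $R\subseteq\Lambda^\infty\times\Lambda^\infty$, the compatible closure $\to_R$ is the least relation with: $(s,t)\in R\Rightarrow s\to_R t$; $s\to_R s'\Rightarrow st\to_R s't,\ ts\to_R ts',\ \lambda x.s\to_R\lambda x.s'$. $R_\beta=\{((\lambda x.s)t, s[t/x])\}$, $\to_\beta$ its compatible closure, $\to^*_\beta$ its reflexive-transitive closure. A term is in head normal form (hnf) if it is $\lambda x_1\ldots x_m.\,a\,t_1\ldots t_n$ ($m,n\ge0$, $a$ an atom, $a\not\equiv\bot$); $t$ has a hnf if $t\to^*_\beta t'$ with $t'$ in hnf. $R_\bot=\{(t,\bot)\mid t\text{ has no hnf}, t\not\equiv\bot\}$; $\to_{\beta\bot}$ is the compatible closure of $R_\beta\cup R_\bot$. The infinitary closure $\to^\infty$ of a relation $\to$ (with reflexive-transitive closure $\to^*$) is the greatest relation such that whenever $s\to^\infty t$: $t\equiv a$ atom and $s\to^*a$;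 or $t\equiv t_1't_2'$, $s\to^*t_1t_2$, $t_i\to^\infty t_i'$; or $t\equiv\lambda x.r'$, $s\to^*\lambda x.r$, $r\to^\infty r'$. $\to^\infty_\beta$ and $\to^\infty_{\beta\bot}$ are the infinitary closures of $\to_\beta$ and $\to_{\beta\bot}$. Parallel $\bot$-reduction $\Rightarrow_\bot$ is the greatest relation such that whenever $s\Rightarrow_\bot t$, one of: $(s,t)\in R_\bot$; $s\equiv t\equiv a$ an atom; $s\equiv s_1s_2$, $t\equiv t_1t_2$ with $s_i\Rightarrow_\bot t_i$ ($i=1,2$); $s\equiv\lambda x.s'$, $t\equiv\lambda x.t'$ with $s'\Rightarrow_\bot t'$. *)

theory Defs
  imports Main
begin

text \<open>Infinitary lambda-terms, represented with de Bruijn indices (so terms are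
  identified up to alpha-equivalence by construction).  Free variables are
  de Bruijn indices beyond the enclosing binders; constants have type 'c,
  and the distinguished constant bottom is passed as a parameter.\<close>

codatatype 'c trm = Var nat | Cst 'c | App "'c trm" "'c trm" | Lam "'c trm"

primcorec lift :: "nat \<Rightarrow> nat \<Rightarrow> 'c trm \<Rightarrow> 'c trm" where
  "lift d k t = (case t of
      Var n \<Rightarrow> Var (if n < k then n else n + d)
    | Cst c \<Rightarrow> Cst c
    | App a b \<Rightarrow> App (lift d k a) (lift d k b)
    | Lam a \<Rightarrow> Lam (lift d (Suc k) a))"

primcorec subst :: "nat \<Rightarrow> 'c trm \<Rightarrow> 'c trm \<Rightarrow> 'c trm" where
  "subst k u s = (case s of
      Var n \<Rightarrow> (if n < k then Var n
                 else if n = k then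
                   (case lift k 0 u of
                      Var m \<Rightarrow> Var m
                    | Cst c \<Rightarrow> Cst c
                    | App a b \<Rightarrow> App a b
                    | Lam a \<Rightarrow> Lam a)
                 else Var (n - 1))
    | Cst c \<Rightarrow> Cst c
    | App a b \<Rightarrow> App (subst k u a) (subst k u b)
    | Lam a \<Rightarrow> Lam (subst (Suc k) u a))"

definition is_atom :: "'c trm \<Rightarrow> bool" where
  "is_atom t \<longleftrightarrow> (\<exists>n. t = Var n) \<or> (\<exists>c. t = Cst c)"

inductive compat :: "('c trm \<Rightarrow> 'c trm \<Rightarrow> bool) \<Rightarrow> 'c trm \<Rightarrow> 'c trm \<Rightarrow> bool"
  for R where
  base: "R s t \<Longrightarrow> compat R s t"
| appL: "compat R s s' \<Longrightarrow> compat R (App s t) (App s' t)"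
| appR: "compat R s s' \<Longrightarrow> compat R (App t s) (App t s')"
| lam:  "compat R s s' \<Longrightarrow> compat R (Lam s) (Lam s')"

definition R_beta :: "'c trm \<Rightarrow> 'c trm \<Rightarrow> bool" where
  "R_beta s t \<longleftrightarrow> (\<exists>u v. s = App (Lam u) v \<and> t = subst 0 v u)"

abbreviation beta_step :: "'c trm \<Rightarrow> 'c trm \<Rightarrow> bool" where
  "beta_step \<equiv> compat R_beta"

definition lams :: "nat \<Rightarrow> 'c trm \<Rightarrow> 'c trm" where
  "lams m t = (Lam ^^ m) t"

definition apps :: "'c trm \<Rightarrow> 'c trm list \<Rightarrow> 'c trm" where
  "apps h ts = foldl App h ts"

definition hnf :: "'c \<Rightarrow> 'c trm \<Rightarrow> bool" where
  "hnf bt t \<longleftrightarrow> (\<exists>m a ts. t = lams m (apps a ts) \<and> is_atom a \<and> a \<noteq> Cst bt)"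

definition has_hnf :: "'c \<Rightarrow> 'c trm \<Rightarrow> bool" where
  "has_hnf bt t \<longleftrightarrow> (\<exists>t'. beta_step\<^sup>*\<^sup>* t t' \<and> hnf bt t')"

definition R_bot :: "'c \<Rightarrow> 'c trm \<Rightarrow> 'c trm \<Rightarrow> bool" where
  "R_bot bt s t \<longleftrightarrow> \<not> has_hnf bt s \<and> s \<noteq> Cst bt \<and> t = Cst bt"

abbreviation betabot_step :: "'c \<Rightarrow> 'c trm \<Rightarrow> 'c trm \<Rightarrow> bool" where
  "betabot_step bt \<equiv> compat (\<lambda>s t. R_beta s t \<or> R_bot bt s t)"

coinductive inf_closure :: "('c trm \<Rightarrow> 'c trm \<Rightarrow> bool) \<Rightarrow> 'c trm \<Rightarrow> 'c trm \<Rightarrow> bool"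
  for step where
  atom: "is_atom a \<Longrightarrow> step\<^sup>*\<^sup>* s a \<Longrightarrow> inf_closure step s a"
| app: "step\<^sup>*\<^sup>* s (App t1 t2) \<Longrightarrow> inf_closure step t1 t1' \<Longrightarrow> inf_closure step t2 t2'
        \<Longrightarrow> inf_closure step s (App t1' t2')"
| lam: "step\<^sup>*\<^sup>* s (Lam r) \<Longrightarrow> inf_closure step r r' \<Longrightarrow> inf_closure step s (Lam r')"

coinductive par_bot :: "'c \<Rightarrow> 'c trm \<Rightarrow> 'c trm \<Rightarrow> bool" for bt where
  rbot: "R_bot bt s t \<Longrightarrow> par_bot bt s t"
| atom: "is_atom a \<Longrightarrow> par_bot bt a a"
| app: "par_bot bt s1 t1 \<Longrightarrow> par_bot bt s2 t2 \<Longrightarrow> par_bot bt (App s1 s2) (App t1 t2)"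
| lam: "par_bot bt s t \<Longrightarrow> par_bot bt (Lam s) (Lam t)"

end

theory Submission
  imports Defs
begin

lemma lift_simps[simp]:
  "lift d k (Var n) = Var (if n < k then n else n + d)"
  "lift d k (Cst c) = Cst c"
  "lift d k (App a b) = App (lift d k a) (lift d k b)"
  "lift d k (Lam a) = Lam (lift d (Suc k) a)"
  by (subst lift.code; simp)+

lemma case_id_trm: "(case t of Var m \<Rightarrow> Var m | Cst c \<Rightarrow> Cst c | App a b \<Rightarrow> App a b | Lam a \<Rightarrow> Lam a) = t"
  by (cases t) auto

lemma subst_simps[simp]:
  "subst k u (Var n) = (if n < k then Var n else if n = k then lift k 0 u else Var (n - 1))"
  "subst k u (Cst c) = Cst c"
  "subst k u (App a b) = App (subst k u a) (subst k u b)"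
  "subst k u (Lam a) = Lam (subst (Suc k) u a)"
  by (subst subst.code; simp add: case_id_trm)+

definition L :: "(nat \<Rightarrow> nat option) \<Rightarrow> nat \<Rightarrow> nat option" where
  "L \<rho> n = (case n of 0 \<Rightarrow> Some 0 | Suc m \<Rightarrow> map_option Suc (\<rho> m))"

lemma L_simps[simp]: "L \<rho> 0 = Some 0" "L \<rho> (Suc m) = map_option Suc (\<rho> m)"
  by (simp_all add: L_def)

lemma Lk_val: "(L ^^ k) \<rho> n = (if n < k then Some n else map_option (\<lambda>m. m + k) (\<rho> (n - k)))"
proof (induction k arbitrary: n)
  case 0 then show ?case by (simp add: option.map_ident)
next
  case (Suc k)
  show ?case
  proof (cases n)
    case 0 then show ?thesis by simp
  next
    case (Suc m) then show ?thesis
      by (simp add: Suc.IH option.map_comp o_def)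
  qed
qed

lemma LLk_val: "L ((L ^^ k) \<rho>) n = (if n < Suc k then Some n else map_option (\<lambda>m. m + Suc k) (\<rho> (n - Suc k)))"
  using Lk_val[of "Suc k" \<rho> n] by simp

inductive xh :: "(nat \<Rightarrow> nat option) \<Rightarrow> 'c trm \<Rightarrow> bool" where
  xvar: "\<rho> n = None \<Longrightarrow> xh \<rho> (Var n)"
| xapp: "xh \<rho> s \<Longrightarrow> xh \<rho> (App s t)"

coinductive Rel :: "(nat \<Rightarrow> nat option) \<Rightarrow> 'c trm \<Rightarrow> 'c trm \<Rightarrow> bool" where
  hole: "xh \<rho> s \<Longrightarrow> Rel \<rho> s t"
| var: "\<rho> n = Some m \<Longrightarrow> Rel \<rho> (Var n) (Var m)"
| cst: "Rel \<rho> (Cst c) (Cst c)"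
| app: "Rel \<rho> s1 t1 \<Longrightarrow> Rel \<rho> s2 t2 \<Longrightarrow> Rel \<rho> (App s1 s2) (App t1 t2)"
| lam: "Rel (L \<rho>) s t \<Longrightarrow> Rel \<rho> (Lam s) (Lam t)"

lemma xh_lift: "xh ((L ^^ i) \<rho>) q \<Longrightarrow> xh ((L ^^ (i + d)) \<rho>) (lift d i q)"
proof (induction "(L ^^ i) \<rho>" q rule: xh.induct)
  case (xvar n)
  then have "\<not> n < i" by (simp add: Lk_val split: if_splits)
  with xvar show ?case by (auto intro!: xh.xvar simp: Lk_val)
next
  case (xapp s t) then show ?case by (auto intro: xh.xapp)
qed

inductive_cases xh_LamE[elim!]: "xh \<rho> (Lam s)"
inductive_cases xh_CstE[elim!]: "xh \<rho> (Cst c)"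
inductive_cases xh_VarE[elim!]: "xh \<rho> (Var n)"
inductive_cases xh_AppE[elim!]: "xh \<rho> (App s t)"

lemma xh_not_lam[simp]: "\<not> xh \<rho> (Lam s)" "\<not> xh \<rho> (Cst c)"
  by auto

lemma Rel_lift: "Rel ((L ^^ i) \<rho>) q q' \<Longrightarrow> Rel ((L ^^ (i + d)) \<rho>) (lift d i q) (lift d i q')"
proof (coinduction arbitrary: i q q' rule: Rel.coinduct)
  case Rel
  then show ?case
  proof cases
    case hole then show ?thesis using xh_lift[OF hole] by simp
  next
    case (var n m) then show ?thesis
      by (simp add: Lk_val split: if_splits; auto)
  next
    case (cst c) then show ?thesis by simp
  next
    case (app s1 t1 s2 t2) then show ?thesis by (simp; blast)
  next
    case (lam s t) then show ?thesis
      by simp (rule disjI1, rule exI[of _ "Suc i"], simp, blast)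
  qed
qed

lemma Rel_step: "Rel \<rho> s t \<Longrightarrow> (\<exists>\<rho>' s' t'. \<rho> = \<rho>' \<and> s = s' \<and> t = t' \<and> xh \<rho>' s') \<or>
  (\<exists>\<rho>' n m. \<rho> = \<rho>' \<and> s = Var n \<and> t = Var m \<and> \<rho>' n = Some m) \<or>
  (\<exists>\<rho>' c. \<rho> = \<rho>' \<and> s = Cst c \<and> t = Cst c) \<or>
  (\<exists>\<rho>' s1 t1 s2 t2. \<rho> = \<rho>' \<and> s = App s1 s2 \<and> t = App t1 t2 \<and> (X \<rho>' s1 t1 \<or> Rel \<rho>' s1 t1) \<and> (X \<rho>' s2 t2 \<or> Rel \<rho>' s2 t2)) \<or>
  (\<exists>\<rho>' s' t'. \<rho> = \<rho>' \<and> s = Lam s' \<and> t = Lam t' \<and> (X (L \<rho>') s' t' \<or> Rel (L \<rho>') s' t'))"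
  by (erule Rel.cases) auto

lemma xh_subst: "xh ((L ^^ Suc j) \<rho>) p \<Longrightarrow> xh ((L ^^ j) \<rho>) (subst j q p)"
proof (induction "(L ^^ Suc j) \<rho>" p rule: xh.induct)
  case (xvar n)
  then have "j < n" by (simp add: Lk_val LLk_val split: if_splits)
  with xvar show ?case by (auto intro!: xh.xvar simp: Lk_val LLk_val split: if_splits)
next
  case (xapp s t) then show ?case by (auto intro: xh.xapp)
qed

lemma Rel_subst: "Rel ((L ^^ Suc j) \<rho>) p p' \<Longrightarrow> Rel \<rho> q q' \<Longrightarrow>
   Rel ((L ^^ j) \<rho>) (subst j q p) (subst j q' p')"
proof (coinduction arbitrary: j p p' rule: Rel.coinduct)
  case Rel
  from Rel(1) show ?case
  proof cases
    case hole then show ?thesis using xh_subst[OF hole] by simp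
  next
    case (var n m)
    have vv: "(if n < Suc j then Some n else map_option (\<lambda>m. m + Suc j) (\<rho> (n - Suc j))) = Some m"
      using var(3) unfolding Lk_val .
    show ?thesis
    proof (cases "n = j")
      case True
      then have "m = j" using vv by simp
      have "Rel ((L ^^ (0 + j)) \<rho>) (lift j 0 q) (lift j 0 q')"
        by (rule Rel_lift) (simp add: Rel(2))
      then have R: "Rel ((L ^^ j) \<rho>) (lift j 0 q) (lift j 0 q')" by simp
      have e: "subst j q p = lift j 0 q" "subst j q' p' = lift j 0 q'"
        using var(1,2) True \<open>m = j\<close> by simp_all
      show ?thesis unfolding e by (rule Rel_step[OF R])
    next
      case False
      show ?thesis
      proof (cases "n < j")
        case True
        then have "m = n" using vv by simp
        then have e: "subst j q p = Var n" "subst j q' p' = Var n" "(L ^^ j) \<rho> n = Some n"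
          using var(1,2) True by (simp_all add: Lk_val)
        show ?thesis unfolding e(1,2) using e(3) by simp
      next
        case gt: False
        with False have "j < n" by simp
        then obtain k where k: "\<rho> (n - Suc j) = Some k" "m = k + Suc j" using vv
          by auto
        then have e: "subst j q p = Var (n - 1)" "subst j q' p' = Var (m - 1)"
          "(L ^^ j) \<rho> (n - 1) = Some (m - 1)"
          using var(1,2) \<open>j < n\<close> by (simp_all add: Lk_val)
        show ?thesis unfolding e(1,2) using e(3) by simp
      qed
    qed
  next
    case (cst c) then show ?thesis by simp
  next
    case (app s1 t1 s2 t2) then show ?thesis
      apply simp
      apply (rule disjI2, rule conjI; rule disjI1)
       apply (use Rel(2) in blast)+
      done
  next
    case (lam s t) then show ?thesis
      apply simp
      apply (rule disjI1, rule exI[where x="Suc j"])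
      apply (use Rel(2) in auto)
      done
  qed
qed


definition \<rho>0 :: "nat \<Rightarrow> nat option" where
  "\<rho>0 n = (case n of 0 \<Rightarrow> None | Suc m \<Rightarrow> Some m)"

lemma Rel_subst_init: "Rel ((L ^^ k) \<rho>0) s (subst k u s)"
proof (coinduction arbitrary: k s rule: Rel.coinduct)
  case Rel
  show ?case
  proof (cases s)
    case (Var n)
    show ?thesis
    proof (cases "n = k")
      case True
      then have "xh ((L ^^ k) \<rho>0) s" using Var by (auto intro!: xh.xvar simp: Lk_val \<rho>0_def)
      then show ?thesis by simp
    next
      case False
      then have "(L ^^ k) \<rho>0 n = Some (if n < k then n else n - 1)"
        by (auto simp: Lk_val \<rho>0_def split: nat.splits)
      then show ?thesis using Var False by auto
    qed
  next
    case (Cst c) then show ?thesis by simp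
  next
    case (App a b) then show ?thesis by (simp; blast)
  next
    case (Lam a) then show ?thesis
      apply simp
      apply (rule disjI1, rule exI[where x="Suc k"])
      apply auto
      done
  qed
qed

lemma Rel_lift_init: "Rel ((L ^^ k) (\<lambda>n. Some (n + d))) u (lift d k u)"
proof (coinduction arbitrary: k u rule: Rel.coinduct)
  case Rel
  show ?case
  proof (cases u)
    case (Var n)
    have "(L ^^ k) (\<lambda>n. Some (n + d)) n = Some (if n < k then n else n + d)"
      by (auto simp: Lk_val)
    then show ?thesis using Var by auto
  next
    case (Cst c) then show ?thesis by simp
  next
    case (App a b) then show ?thesis by (simp; blast)
  next
    case (Lam a) then show ?thesis
      apply simp
      apply (rule disjI1, rule exI[where x="Suc k"])
      apply auto
      done
  qed
qed

lemma Rel_sim: "beta_step t t' \<Longrightarrow> Rel \<rho> s t \<Longrightarrow> \<exists>s'. (s = s' \<or> beta_step s s') \<and> Rel \<rho> s' t'"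
proof (induction t t' arbitrary: \<rho> s rule: compat.induct)
  case (base t t')
  then obtain p' q' where t: "t = App (Lam p') q'" "t' = subst 0 q' p'" by (auto simp: R_beta_def)
  from base(2)[unfolded t(1)] show ?case
  proof cases
    case hole then show ?thesis using Rel.hole by blast
  next
    case (app s1 s2)
    from app(2) show ?thesis
    proof cases
      case hole then show ?thesis using app Rel.hole xh.xapp by blast
    next
      case (lam p)
      have "Rel ((L ^^ 0) \<rho>) (subst 0 s2 p) (subst 0 q' p')"
        by (rule Rel_subst) (use lam app in simp_all)
      moreover have "beta_step s (subst 0 s2 p)"
        using app lam by (auto intro!: compat.base simp: R_beta_def)
      ultimately show ?thesis using t by auto
    qed
  qed
next
  case (appL a a' b)
  from appL(3) show ?case
  proof cases
    case hole then show ?thesis using Rel.hole by blast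
  next
    case (app s1 s2)
    then obtain s1' where "s1 = s1' \<or> beta_step s1 s1'" "Rel \<rho> s1' a'" using appL(2) by blast
    then show ?thesis using app by (auto intro: compat.appL Rel.app)
  qed
next
  case (appR a a' b)
  from appR(3) show ?case
  proof cases
    case hole then show ?thesis using Rel.hole by blast
  next
    case (app s1 s2)
    then obtain s2' where "s2 = s2' \<or> beta_step s2 s2'" "Rel \<rho> s2' a'" using appR(2) by blast
    then show ?thesis using app by (auto intro: compat.appR Rel.app)
  qed
next
  case (lam a a')
  from lam(3) show ?case
  proof cases
    case hole then show ?thesis using Rel.hole by blast
  next
    case (lam s0)
    then obtain s0' where "s0 = s0' \<or> beta_step s0 s0'" "Rel (L \<rho>) s0' a'" using lam.IH by blast
    then show ?thesis using lam by (auto intro: compat.lam Rel.lam)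
  qed
qed

lemma Rel_sim_star: "beta_step\<^sup>*\<^sup>* t t' \<Longrightarrow> Rel \<rho> s t \<Longrightarrow> \<exists>s'. beta_step\<^sup>*\<^sup>* s s' \<and> Rel \<rho> s' t'"
proof (induction rule: rtranclp_induct)
  case base then show ?case by blast
next
  case (step y z)
  then obtain s' where "beta_step\<^sup>*\<^sup>* s s'" "Rel \<rho> s' y" by blast
  with Rel_sim[OF step(2)] show ?case by (metis rtranclp.rtrancl_into_rtrancl)
qed

lemma apps_Nil[simp]: "apps h [] = h" by (simp add: apps_def)
lemma apps_snoc[simp]: "apps h (ts @ [t]) = App (apps h ts) t" by (simp add: apps_def)
lemma lams_0[simp]: "lams 0 t = t" by (simp add: lams_def)
lemma lams_Suc[simp]: "lams (Suc m) t = Lam (lams m t)" by (simp add: lams_def)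

lemma xh_apps: "xh \<rho> s \<Longrightarrow> \<exists>n ts. s = apps (Var n) ts"
proof (induction rule: xh.induct)
  case (xvar n) then show ?case by (metis apps_Nil)
next
  case (xapp s t) then show ?case by (metis apps_snoc)
qed

lemma hnf_Lam: "hnf bt s \<Longrightarrow> hnf bt (Lam s)"
  unfolding hnf_def by (metis lams_Suc)

lemma hnf_xh: "xh \<rho> s \<Longrightarrow> hnf bt s"
  using xh_apps[of \<rho> s] unfolding hnf_def is_atom_def by (metis lams_0 trm.distinct(1))

lemma Rel_apps: "Rel \<rho> s (apps a ts) \<Longrightarrow> is_atom a \<Longrightarrow> a \<noteq> Cst bt \<Longrightarrow>
   xh \<rho> s \<or> (\<exists>a' ts'. s = apps a' ts' \<and> is_atom a' \<and> a' \<noteq> Cst bt)"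
proof (induction ts arbitrary: s rule: rev_induct)
  case Nil
  from Nil(1) show ?case
  proof cases
    case (var n m) then show ?thesis by (metis apps_Nil is_atom_def trm.distinct(1))
  next
    case (cst c) then show ?thesis using Nil by (metis apps_Nil)
  qed (use Nil in \<open>auto simp: is_atom_def\<close>)
next
  case (snoc t ts)
  from snoc(2) show ?case
  proof cases
    case (app s1 t1 s2 t2)
    then have "Rel \<rho> s1 (apps a ts)" by simp
    from snoc.IH[OF this snoc(3,4)] show ?thesis
    proof
      assume "xh \<rho> s1" then show ?thesis using app by (auto intro: xh.xapp)
    next
      assume "\<exists>a' ts'. s1 = apps a' ts' \<and> is_atom a' \<and> a' \<noteq> Cst bt"
      then show ?thesis using app by (metis apps_snoc)
    qed
  qed auto
qed

lemma Rel_hnf: "Rel \<rho> s (lams m (apps a ts)) \<Longrightarrow> is_atom a \<Longrightarrow> a \<noteq> Cst bt \<Longrightarrow> hnf bt s"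
proof (induction m arbitrary: \<rho> s)
  case 0
  from Rel_apps[of \<rho> s a ts bt] 0 show ?case
    using hnf_xh unfolding hnf_def by (metis lams_0)
next
  case (Suc m)
  from Suc(2) show ?case
  proof cases
    case hole then show ?thesis by (rule hnf_xh)
  next
    case (lam s0) then show ?thesis using Suc by (auto intro: hnf_Lam)
  qed auto
qed

lemma Rel_has_hnf: "Rel \<rho> s t \<Longrightarrow> has_hnf bt t \<Longrightarrow> has_hnf bt s"
  unfolding has_hnf_def
proof -
  assume "Rel \<rho> s t" "\<exists>t'. beta_step\<^sup>*\<^sup>* t t' \<and> hnf bt t'"
  then obtain t' where t': "beta_step\<^sup>*\<^sup>* t t'" "hnf bt t'" by blast
  then obtain s' where "beta_step\<^sup>*\<^sup>* s s'" "Rel \<rho> s' t'" using Rel_sim_star \<open>Rel \<rho> s t\<close> by blast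
  moreover have "hnf bt s'" using t'(2) \<open>Rel \<rho> s' t'\<close> Rel_hnf unfolding hnf_def by metis
  ultimately show "\<exists>t'. beta_step\<^sup>*\<^sup>* s t' \<and> hnf bt t'" by blast
qed

lemma has_hnf_subst: "has_hnf bt (subst k u s) \<Longrightarrow> has_hnf bt s"
  using Rel_has_hnf[OF Rel_subst_init] .

lemma has_hnf_lift: "has_hnf bt (lift d k u) \<Longrightarrow> has_hnf bt u"
  using Rel_has_hnf[OF Rel_lift_init] .


lemma star_has_hnf: "beta_step\<^sup>*\<^sup>* s s' \<Longrightarrow> has_hnf bt s' \<Longrightarrow> has_hnf bt s"
  unfolding has_hnf_def by (meson rtranclp_trans)

lemma star_ctx:
  assumes "\<And>x y. r x y \<Longrightarrow> r (f x) (f y)" "r\<^sup>*\<^sup>* p p'"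
  shows "r\<^sup>*\<^sup>* (f p) (f p')"
  using assms(2)
proof (induction rule: rtranclp_induct)
  case base show ?case by simp
next
  case (step y z)
  show ?case by (rule rtranclp.rtrancl_into_rtrancl[OF step.IH assms(1)[OF step.hyps(2)]])
qed

lemma star_Lam: "beta_step\<^sup>*\<^sup>* p p' \<Longrightarrow> beta_step\<^sup>*\<^sup>* (Lam p) (Lam p')"
  by (rule star_ctx[where f=Lam]) (rule compat.lam)

lemma star_AppL: "beta_step\<^sup>*\<^sup>* p p' \<Longrightarrow> beta_step\<^sup>*\<^sup>* (App p q) (App p' q)"
  by (rule star_ctx[where f="\<lambda>x. App x q"]) (rule compat.appL)

lemma star_AppR: "beta_step\<^sup>*\<^sup>* p p' \<Longrightarrow> beta_step\<^sup>*\<^sup>* (App q p) (App q p')"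
  by (rule star_ctx[where f="\<lambda>x. App q x"]) (rule compat.appR)

lemma step_Cst: "compat R (Cst c) x \<Longrightarrow> R (Cst c) x"
  by (erule compat.cases) auto

lemma apps_cases: "apps a ts = a \<and> ts = [] \<or> (\<exists>ts0 t. ts = ts0 @ [t] \<and> apps a ts = App (apps a ts0) t)"
  by (cases ts rule: rev_cases) auto

lemma apps_not_Lam: "is_atom a \<Longrightarrow> apps a ts \<noteq> Lam p"
  using apps_cases[of a ts] by (auto simp: is_atom_def)

lemma not_hnf_Cst: "\<not> hnf bt (Cst bt)"
proof
  assume "hnf bt (Cst bt)"
  then obtain m a ts where h: "Cst bt = lams m (apps a ts)" "is_atom a" "a \<noteq> Cst bt" unfolding hnf_def by blast
  then have "m = 0" by (cases m) auto
  then show False using h apps_cases[of a ts] by auto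
qed

lemma star_Cst: "beta_step\<^sup>*\<^sup>* (Cst c) x \<Longrightarrow> x = Cst c"
proof (induction rule: rtranclp_induct)
  case base then show ?case by simp
next
  case (step y z) then show ?case using step_Cst[of R_beta c z] by (simp add: R_beta_def)
qed

lemma not_has_hnf_Cst: "\<not> has_hnf bt (Cst bt)"
proof
  assume "has_hnf bt (Cst bt)"
  then obtain t' where "beta_step\<^sup>*\<^sup>* (Cst bt) t'" "hnf bt t'" unfolding has_hnf_def by blast
  moreover note star_Cst
  ultimately show False using not_hnf_Cst by metis
qed

lemma hnf_has_hnf: "hnf bt s \<Longrightarrow> has_hnf bt s"
  unfolding has_hnf_def by blast

lemma has_hnf_Lam_I: "has_hnf bt p \<Longrightarrow> has_hnf bt (Lam p)"
proof -
  assume "has_hnf bt p"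
  then obtain h where "beta_step\<^sup>*\<^sup>* p h" "hnf bt h" unfolding has_hnf_def by blast
  then have "beta_step\<^sup>*\<^sup>* (Lam p) (Lam h)" "hnf bt (Lam h)" by (auto intro: star_Lam hnf_Lam)
  then show ?thesis unfolding has_hnf_def by blast
qed

lemma step_Lam: "beta_step (Lam p) x \<Longrightarrow> \<exists>p'. x = Lam p' \<and> beta_step p p'"
  by (erule compat.cases; unfold R_beta_def; blast)

lemma star_Lam_inv: "beta_step\<^sup>*\<^sup>* (Lam p) x \<Longrightarrow> \<exists>p'. x = Lam p' \<and> beta_step\<^sup>*\<^sup>* p p'"
proof (induction rule: rtranclp_induct)
  case base then show ?case by simp
next
  case (step y z)
  then obtain p' where p': "y = Lam p'" "beta_step\<^sup>*\<^sup>* p p'" by blast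
  then obtain p'' where p'': "z = Lam p''" "beta_step p' p''" using step_Lam[of p' z] step(2) by blast
  have "beta_step\<^sup>*\<^sup>* p p''" by (rule rtranclp.rtrancl_into_rtrancl[OF p'(2) p''(2)])
  then show ?case using p''(1) by blast
qed

lemma lams_apps_Lam: "Lam p = lams m (apps a ts) \<Longrightarrow> is_atom a \<Longrightarrow> \<exists>m'. m = Suc m' \<and> p = lams m' (apps a ts)"
proof (cases m)
  case 0
  assume h: "Lam p = lams m (apps a ts)" "is_atom a"
  show ?thesis
  proof (cases ts rule: rev_cases)
    case Nil then show ?thesis using h 0 by (auto simp: is_atom_def)
  next
    case (snoc ys y) then show ?thesis using h 0 by simp
  qed
qed simp

lemma hnf_Lam_inv: "hnf bt (Lam p) \<Longrightarrow> hnf bt p"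
  unfolding hnf_def using lams_apps_Lam by blast

lemma has_hnf_Lam_D: "has_hnf bt (Lam p) \<Longrightarrow> has_hnf bt p"
proof -
  assume "has_hnf bt (Lam p)"
  then obtain h where h: "beta_step\<^sup>*\<^sup>* (Lam p) h" "hnf bt h" unfolding has_hnf_def by blast
  obtain p' where p': "h = Lam p'" "beta_step\<^sup>*\<^sup>* p p'" using star_Lam_inv[OF h(1)] by blast
  have "hnf bt p'" using h(2) p'(1) hnf_Lam_inv by simp
  then show ?thesis using p'(2) unfolding has_hnf_def by blast
qed

lemma step_App: "beta_step (App a b) x \<Longrightarrow>
   (\<exists>p. a = Lam p \<and> x = subst 0 b p) \<or> (\<exists>a'. x = App a' b \<and> beta_step a a') \<or> (\<exists>b'. x = App a b' \<and> beta_step b b')"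
  by (erule compat.cases; unfold R_beta_def; blast)

lemma star_App_inv: "beta_step\<^sup>*\<^sup>* (App t1 t2) h \<Longrightarrow>
  (\<exists>h1 h2. h = App h1 h2 \<and> beta_step\<^sup>*\<^sup>* t1 h1) \<or> (\<exists>p q. beta_step\<^sup>*\<^sup>* t1 (Lam p) \<and> beta_step\<^sup>*\<^sup>* (subst 0 q p) h)"
proof (induction rule: rtranclp_induct)
  case base then show ?case by blast
next
  case (step y z)
  from step(3) show ?case
  proof
    assume "\<exists>h1 h2. y = App h1 h2 \<and> beta_step\<^sup>*\<^sup>* t1 h1"
    then obtain h1 h2 where y: "y = App h1 h2" "beta_step\<^sup>*\<^sup>* t1 h1" by blast
    from step_App[OF step(2)[unfolded y(1)]] show ?case
    proof (elim disjE exE conjE)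
      fix p assume "h1 = Lam p" "z = subst 0 h2 p"
      then show ?case using y(2) by blast
    next
      fix a' assume a: "z = App a' h2" "beta_step h1 a'"
      have "beta_step\<^sup>*\<^sup>* t1 a'" by (rule rtranclp.rtrancl_into_rtrancl[OF y(2) a(2)])
      then show ?case using a(1) by blast
    next
      fix b' assume "z = App h1 b'"
      then show ?case using y(2) by blast
    qed
  next
    assume "\<exists>p q. beta_step\<^sup>*\<^sup>* t1 (Lam p) \<and> beta_step\<^sup>*\<^sup>* (subst 0 q p) y"
    then show ?case using step(2) by (meson rtranclp.rtrancl_into_rtrancl)
  qed
qed

lemma lams_apps_App: "App h1 h2 = lams m (apps a ts) \<Longrightarrow> is_atom a \<Longrightarrow> m = 0 \<and> (\<exists>ts0 t. ts = ts0 @ [t] \<and> h1 = apps a ts0)"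
proof (cases m)
  case 0
  assume h: "App h1 h2 = lams m (apps a ts)" "is_atom a"
  show ?thesis
  proof (cases ts rule: rev_cases)
    case Nil then show ?thesis using h 0 by (auto simp: is_atom_def)
  next
    case (snoc ys y) then show ?thesis using h 0 by simp
  qed
qed simp

lemma hnf_App_inv: "hnf bt (App h1 h2) \<Longrightarrow> hnf bt h1"
proof -
  assume "hnf bt (App h1 h2)"
  then obtain m a ts where h: "App h1 h2 = lams m (apps a ts)" "is_atom a" "a \<noteq> Cst bt" unfolding hnf_def by blast
  then obtain ts0 where "h1 = apps a ts0" using lams_apps_App by blast
  then have "h1 = lams 0 (apps a ts0)" by simp
  then show ?thesis using h(2,3) unfolding hnf_def by blast
qed

lemma has_hnf_App_D: "has_hnf bt (App t1 t2) \<Longrightarrow> has_hnf bt t1"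
proof -
  assume "has_hnf bt (App t1 t2)"
  then obtain h where h: "beta_step\<^sup>*\<^sup>* (App t1 t2) h" "hnf bt h" unfolding has_hnf_def by blast
  from star_App_inv[OF h(1)] show ?thesis
  proof (elim disjE exE conjE)
    fix h1 h2 assume "h = App h1 h2" "beta_step\<^sup>*\<^sup>* t1 h1"
    moreover have "hnf bt (App h1 h2)" using h(2) \<open>h = App h1 h2\<close> by simp
    then have "hnf bt h1" by (rule hnf_App_inv)
    ultimately show ?thesis unfolding has_hnf_def by blast
  next
    fix p q assume a: "beta_step\<^sup>*\<^sup>* t1 (Lam p)" "beta_step\<^sup>*\<^sup>* (subst 0 q p) h"
    then have "has_hnf bt (subst 0 q p)" using h(2) unfolding has_hnf_def by blast
    then have "has_hnf bt (Lam p)" by (rule has_hnf_Lam_I[OF has_hnf_subst])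
    then show ?thesis by (rule star_has_hnf[OF a(1)])
  qed
qed


coinductive B2 :: "'c \<Rightarrow> 'c trm \<Rightarrow> 'c trm \<Rightarrow> bool" for bt where
  nohnf: "\<not> has_hnf bt s \<Longrightarrow> \<not> has_hnf bt t \<Longrightarrow> B2 bt s t"
| atom: "is_atom a \<Longrightarrow> B2 bt a a"
| app: "B2 bt s1 t1 \<Longrightarrow> B2 bt s2 t2 \<Longrightarrow> B2 bt (App s1 s2) (App t1 t2)"
| lam: "B2 bt s t \<Longrightarrow> B2 bt (Lam s) (Lam t)"

lemma is_atom_simps[simp]: "is_atom (Var n)" "is_atom (Cst c)" "\<not> is_atom (App a b)" "\<not> is_atom (Lam a)"
  by (auto simp: is_atom_def)

lemma is_atom_lift: "is_atom a \<Longrightarrow> is_atom (lift d i a)"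
  by (auto simp: is_atom_def)

lemma B2_lift: "B2 bt u u' \<Longrightarrow> B2 bt (lift d i u) (lift d i u')"
proof (coinduction arbitrary: i u u' rule: B2.coinduct)
  case B2
  then show ?case
  proof cases
    case nohnf
    then have "\<not> has_hnf bt (lift d i u)" "\<not> has_hnf bt (lift d i u')"
      using has_hnf_lift[of bt d i u] has_hnf_lift[of bt d i u'] by auto
    then show ?thesis by simp
  next
    case atom
    then have "is_atom (lift d i u)" by (simp add: is_atom_lift)
    then show ?thesis using atom by simp
  next
    case (app s1 t1 s2 t2) then show ?thesis by (simp; blast)
  next
    case (lam s t) then show ?thesis by (simp; blast)
  qed
qed

lemma B2_subst: "B2 bt s s' \<Longrightarrow> B2 bt u u' \<Longrightarrow> B2 bt (subst k u s) (subst k u' s')"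
proof (coinduction arbitrary: k s s' rule: B2.coinduct)
  case B2
  from B2(1) show ?case
  proof cases
    case nohnf
    then have "\<not> has_hnf bt (subst k u s)" "\<not> has_hnf bt (subst k u' s')"
      using has_hnf_subst[of bt k u s] has_hnf_subst[of bt k u' s'] by auto
    then show ?thesis by simp
  next
    case atom
    show ?thesis
    proof (cases "s = Var k")
      case True
      have R: "B2 bt (lift k 0 u) (lift k 0 u')" by (rule B2_lift[OF B2(2)])
      have e: "subst k u s = lift k 0 u" "subst k u' s' = lift k 0 u'" using atom True by simp_all
      show ?thesis unfolding e using R by (cases rule: B2.cases) simp_all
    next
      case False
      then have "subst k u s = subst k u' s" "is_atom (subst k u s)" using atom \<open>s \<noteq> Var k\<close>
        by (auto simp: is_atom_def split: if_splits)
      then show ?thesis using atom by simp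
    qed
  next
    case (app s1 t1 s2 t2) then show ?thesis using B2(2) by (simp; blast)
  next
    case (lam s t) then show ?thesis using B2(2) by (simp; blast)
  qed
qed


lemma step_has_hnf: "beta_step s s' \<Longrightarrow> has_hnf bt s' \<Longrightarrow> has_hnf bt s"
  using star_has_hnf[OF r_into_rtranclp] .

lemma B2_sim: "beta_step s s' \<Longrightarrow> B2 bt s t \<Longrightarrow> \<exists>t'. (t = t' \<or> beta_step t t') \<and> B2 bt s' t'"
proof (induction s s' arbitrary: t rule: compat.induct)
  case (base s s')
  then obtain p q where s: "s = App (Lam p) q" "s' = subst 0 q p" by (auto simp: R_beta_def)
  from base(2) show ?case
  proof cases
    case nohnf
    have "\<not> has_hnf bt s'"
    proof
      assume "has_hnf bt s'"
      then have "has_hnf bt s" by (rule step_has_hnf[OF compat.base[where R=R_beta, OF base(1)]])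
      then show False using nohnf(1) by contradiction
    qed
    then have "B2 bt s' t" using nohnf(2) by (rule B2.nohnf)
    then show ?thesis by blast
  next
    case atom then show ?thesis using s by simp
  next
    case (app s1 t1 s2 t2)
    then have s1: "s1 = Lam p" "s2 = q" using s by simp_all
    from app(3)[unfolded s1] show ?thesis
    proof cases
      case nohnf
      have "\<not> has_hnf bt s'"
      proof
        assume "has_hnf bt s'"
        then have "has_hnf bt (Lam p)" unfolding s(2) by (rule has_hnf_Lam_I[OF has_hnf_subst])
        then show False using nohnf(1) by contradiction
      qed
      moreover have "\<not> has_hnf bt t"
      proof
        assume "has_hnf bt t"
        then have "has_hnf bt t1" unfolding app(2) by (rule has_hnf_App_D)
        then show False using nohnf(2) by contradiction
      qed
      ultimately have "B2 bt s' t" by (rule B2.nohnf)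
      then show ?thesis by blast
    next
      case atom then show ?thesis by simp
    next
      case (lam p')
      have "B2 bt p p'" using lam by simp
      then have "B2 bt s' (subst 0 t2 p')" unfolding s(2) by (rule B2_subst) (use app(4) s1 in simp)
      moreover have "beta_step t (subst 0 t2 p')" unfolding app(2) lam
        by (rule compat.base) (auto simp: R_beta_def)
      ultimately show ?thesis by blast
    qed
  qed (use s in simp)
next
  case (appL a a' b)
  from appL(3) show ?case
  proof cases
    case nohnf
    have "\<not> has_hnf bt (App a' b)"
    proof
      assume "has_hnf bt (App a' b)"
      then have "has_hnf bt (App a b)" by (rule step_has_hnf[OF compat.appL[OF appL(1)]])
      then show False using nohnf(1) by contradiction
    qed
    then have "B2 bt (App a' b) t" using nohnf(2) by (rule B2.nohnf)
    then show ?thesis by blast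
  next
    case atom then show ?thesis by simp
  next
    case (app t1 t2)
    have "B2 bt a t1" using app by simp
    then obtain t1' where t1': "t1 = t1' \<or> beta_step t1 t1'" "B2 bt a' t1'" using appL(2) by blast
    have "B2 bt (App a' b) (App t1' t2)" using t1'(2) app by (simp add: B2.app)
    moreover have "t = App t1' t2 \<or> beta_step t (App t1' t2)" using t1'(1) app compat.appL by blast
    ultimately show ?thesis by blast
  qed
next
  case (appR a a' b)
  from appR(3) show ?case
  proof cases
    case nohnf
    have "\<not> has_hnf bt (App b a')"
    proof
      assume "has_hnf bt (App b a')"
      then have "has_hnf bt (App b a)" by (rule step_has_hnf[OF compat.appR[OF appR(1)]])
      then show False using nohnf(1) by contradiction
    qed
    then have "B2 bt (App b a') t" using nohnf(2) by (rule B2.nohnf)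
    then show ?thesis by blast
  next
    case atom then show ?thesis by simp
  next
    case (app t1 t2)
    have "B2 bt a t2" using app by simp
    then obtain t2' where t2': "t2 = t2' \<or> beta_step t2 t2'" "B2 bt a' t2'" using appR(2) by blast
    have "B2 bt (App b a') (App t1 t2')" using t2'(2) app by (simp add: B2.app)
    moreover have "t = App t1 t2' \<or> beta_step t (App t1 t2')" using t2'(1) app compat.appR by blast
    ultimately show ?thesis by blast
  qed
next
  case (lam a a')
  from lam(3) show ?case
  proof cases
    case nohnf
    have "\<not> has_hnf bt (Lam a')"
    proof
      assume "has_hnf bt (Lam a')"
      then have "has_hnf bt (Lam a)" by (rule step_has_hnf[OF compat.lam[OF lam(1)]])
      then show False using nohnf(1) by contradiction
    qed
    then have "B2 bt (Lam a') t" using nohnf(2) by (rule B2.nohnf)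
    then show ?thesis by blast
  next
    case atom then show ?thesis by simp
  next
    case (lam t0)
    have "B2 bt a t0" using lam by simp
    then obtain t0' where t0': "t0 = t0' \<or> beta_step t0 t0'" "B2 bt a' t0'" using \<open>\<And>t. B2 bt a t \<Longrightarrow> _\<close> by blast
    have "B2 bt (Lam a') (Lam t0')" using t0'(2) by (rule B2.lam)
    moreover have "t = Lam t0' \<or> beta_step t (Lam t0')" using t0'(1) lam compat.lam by blast
    ultimately show ?thesis by blast
  qed
qed

lemma B2_sim_star: "beta_step\<^sup>*\<^sup>* s s' \<Longrightarrow> B2 bt s t \<Longrightarrow> \<exists>t'. beta_step\<^sup>*\<^sup>* t t' \<and> B2 bt s' t'"
proof (induction rule: rtranclp_induct)
  case base then show ?case by blast
next
  case (step y z)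
  then obtain t' where t': "beta_step\<^sup>*\<^sup>* t t'" "B2 bt y t'" by blast
  obtain t'' where t'': "t' = t'' \<or> beta_step t' t''" "B2 bt z t''" using B2_sim[OF step(2) t'(2)] by blast
  have "beta_step\<^sup>*\<^sup>* t t''" using t'(1) t''(1) by (metis rtranclp.rtrancl_into_rtrancl)
  then show ?case using t''(2) by blast
qed

lemma hnf_apps: "is_atom a \<Longrightarrow> a \<noteq> Cst bt \<Longrightarrow> hnf bt (apps a ts)"
  unfolding hnf_def by (rule exI[of _ 0], rule exI[of _ a], rule exI[of _ ts]) simp

lemma B2_apps: "B2 bt (apps a ts) t \<Longrightarrow> is_atom a \<Longrightarrow> a \<noteq> Cst bt \<Longrightarrow> \<exists>ts'. t = apps a ts'"
proof (induction ts arbitrary: t rule: rev_induct)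
  case Nil
  have hh: "has_hnf bt a" using hnf_has_hnf[OF hnf_apps[OF Nil(2,3), of "[]"]] by simp
  from Nil(1) show ?case
  proof cases
    case nohnf then show ?thesis using hh by simp
  next
    case atom then show ?thesis by (metis apps_Nil)
  next
    case app then show ?thesis using Nil(2) by simp
  next
    case lam then show ?thesis using Nil(2) by simp
  qed
next
  case (snoc x ts)
  have "has_hnf bt (apps a (ts @ [x]))" by (rule hnf_has_hnf[OF hnf_apps[OF snoc(3,4)]])
  from snoc(2) show ?case
  proof cases
    case nohnf then show ?thesis using \<open>has_hnf bt (apps a (ts @ [x]))\<close> by simp
  next
    case atom then show ?thesis by simp
  next
    case (app s1 t1 s2 t2)
    then have "B2 bt (apps a ts) t1" by simp
    from snoc.IH[OF this snoc(3,4)] obtain ts' where "t1 = apps a ts'" by blast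
    then show ?thesis using app by (metis apps_snoc)
  next
    case lam then show ?thesis by simp
  qed
qed

lemma B2_hnf: "B2 bt (lams m (apps a ts)) t \<Longrightarrow> is_atom a \<Longrightarrow> a \<noteq> Cst bt \<Longrightarrow> hnf bt t"
proof (induction m arbitrary: t)
  case 0
  then have "B2 bt (apps a ts) t" by simp
  from B2_apps[OF this 0(2,3)] obtain ts' where "t = apps a ts'" by blast
  then show ?case using hnf_apps[OF 0(2,3)] by simp
next
  case (Suc m)
  have "hnf bt (lams (Suc m) (apps a ts))"
    unfolding hnf_def using Suc(3,4) by blast
  then have hh: "has_hnf bt (lams (Suc m) (apps a ts))" by (rule hnf_has_hnf)
  from Suc(2) show ?case
  proof cases
    case nohnf then show ?thesis using hh by simp
  next
    case atom then show ?thesis by simp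
  next
    case app then show ?thesis by simp
  next
    case (lam s0 t0)
    then have "B2 bt (lams m (apps a ts)) t0" by simp
    then have "hnf bt t0" using Suc.IH Suc(3,4) by blast
    then show ?thesis using lam hnf_Lam by simp
  qed
qed

lemma B2_has_hnf: "B2 bt s t \<Longrightarrow> has_hnf bt s \<Longrightarrow> has_hnf bt t"
proof -
  assume B: "B2 bt s t" and "has_hnf bt s"
  then obtain h where h: "beta_step\<^sup>*\<^sup>* s h" "hnf bt h" unfolding has_hnf_def by blast
  obtain t' where t': "beta_step\<^sup>*\<^sup>* t t'" "B2 bt h t'" using B2_sim_star[OF h(1) B] by blast
  from h(2) obtain m a ts where "h = lams m (apps a ts)" "is_atom a" "a \<noteq> Cst bt" unfolding hnf_def by blast
  then have "hnf bt t'" using B2_hnf[of bt m a ts t'] t'(2) by simp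
  then show ?thesis using t'(1) unfolding has_hnf_def by blast
qed

lemma par_bot_B2: "par_bot bt s t \<Longrightarrow> B2 bt s t"
proof (coinduction arbitrary: s t rule: B2.coinduct)
  case B2
  then show ?case
  proof cases
    case rbot
    then have "\<not> has_hnf bt s" "\<not> has_hnf bt t" using not_has_hnf_Cst[of bt] by (auto simp: R_bot_def)
    then show ?thesis by (intro disjI1 exI conjI) (rule refl)+
  next
    case atom then show ?thesis by simp
  next
    case (app s1 t1 s2 t2) then show ?thesis by simp
  next
    case (lam s t) then show ?thesis by simp
  qed
qed

lemma par_bot_has_hnf: "par_bot bt s t \<Longrightarrow> has_hnf bt s \<Longrightarrow> has_hnf bt t"
  by (rule B2_has_hnf[OF par_bot_B2])


lemma par_bot_refl: "par_bot bt s s"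
proof (coinduction arbitrary: s rule: par_bot.coinduct)
  case par_bot
  show ?case
  proof (cases s)
    case (Var n) then show ?thesis by simp
  next
    case (Cst c) then show ?thesis by simp
  next
    case (App a b) then show ?thesis by simp
  next
    case (Lam a) then show ?thesis by simp
  qed
qed

lemma par_bot_bot_case: "\<not> has_hnf bt x \<Longrightarrow> par_bot bt x (Cst bt)"
proof (cases "x = Cst bt")
  case True then show ?thesis by (simp add: par_bot.atom)
next
  case False
  assume "\<not> has_hnf bt x"
  with False show ?thesis by (intro par_bot.rbot) (simp add: R_bot_def)
qed

lemma par_bot_step: "par_bot bt s t \<Longrightarrow> (\<exists>s' t'. s = s' \<and> t = t' \<and> R_bot bt s' t') \<or>
   (\<exists>a. s = a \<and> t = a \<and> is_atom a) \<or>
   (\<exists>s1 t1 s2 t2. s = App s1 s2 \<and> t = App t1 t2 \<and> (X s1 t1 \<or> par_bot bt s1 t1) \<and> (X s2 t2 \<or> par_bot bt s2 t2)) \<or>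
   (\<exists>s' t'. s = Lam s' \<and> t = Lam t' \<and> (X s' t' \<or> par_bot bt s' t'))"
  by (erule par_bot.cases) auto

lemma par_bot_lift: "par_bot bt u u' \<Longrightarrow> par_bot bt (lift d i u) (lift d i u')"
proof (coinduction arbitrary: i u u' rule: par_bot.coinduct)
  case par_bot
  then show ?case
  proof cases
    case rbot
    then have nh: "\<not> has_hnf bt (lift d i u)" "u' = Cst bt" using has_hnf_lift[of bt d i u] by (auto simp: R_bot_def)
    then have "par_bot bt (lift d i u) (lift d i u')" by (simp add: par_bot_bot_case)
    then show ?thesis by (rule par_bot_step)
  next
    case atom
    then have "is_atom (lift d i u)" by (simp add: is_atom_lift)
    then show ?thesis using atom by simp
  next
    case (app s1 t1 s2 t2) then show ?thesis by (simp; blast)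
  next
    case (lam s t) then show ?thesis by (simp; blast)
  qed
qed

lemma par_bot_subst: "par_bot bt s s' \<Longrightarrow> par_bot bt u u' \<Longrightarrow> par_bot bt (subst k u s) (subst k u' s')"
proof (coinduction arbitrary: k s s' rule: par_bot.coinduct)
  case par_bot
  from par_bot(1) show ?case
  proof cases
    case rbot
    then have nh: "\<not> has_hnf bt (subst k u s)" "s' = Cst bt" using has_hnf_subst[of bt k u s] by (auto simp: R_bot_def)
    then have "par_bot bt (subst k u s) (subst k u' s')" by (simp add: par_bot_bot_case)
    then show ?thesis by (rule par_bot_step)
  next
    case atom
    show ?thesis
    proof (cases "s = Var k")
      case True
      have R: "par_bot bt (lift k 0 u) (lift k 0 u')" by (rule par_bot_lift[OF par_bot(2)])
      have e: "subst k u s = lift k 0 u" "subst k u' s' = lift k 0 u'" using atom True by simp_all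
      show ?thesis unfolding e using R by (rule par_bot_step)
    next
      case False
      then have "subst k u s = subst k u' s" "is_atom (subst k u s)" using atom \<open>s \<noteq> Var k\<close>
        by (auto simp: is_atom_def split: if_splits)
      then show ?thesis using atom by simp
    qed
  next
    case (app s1 t1 s2 t2) then show ?thesis using par_bot(2) by (simp; blast)
  next
    case (lam s t) then show ?thesis using par_bot(2) by (simp; blast)
  qed
qed


lemma par_bot_proj: "betabot_step bt t t' \<Longrightarrow> par_bot bt s t \<Longrightarrow> \<exists>s'. (s = s' \<or> beta_step s s') \<and> par_bot bt s' t'"
proof (induction t t' arbitrary: s rule: compat.induct)
  case (base t t')
  from base(1) show ?case
  proof
    assume "R_beta t t'"
    then obtain p' q' where t: "t = App (Lam p') q'" "t' = subst 0 q' p'" by (auto simp: R_beta_def)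
    from base(2)[unfolded t(1)] show ?thesis
    proof cases
      case rbot then show ?thesis by (simp add: R_bot_def)
    next
      case atom then show ?thesis by (auto simp: is_atom_def)
    next
      case (app s1 s2)
      from app(2) show ?thesis
      proof cases
        case rbot then show ?thesis by (simp add: R_bot_def)
      next
        case atom then show ?thesis by (auto simp: is_atom_def)
      next
        case (lam p)
        have "par_bot bt (subst 0 s2 p) (subst 0 q' p')"
          by (rule par_bot_subst) (use lam app in simp_all)
        moreover have "beta_step s (subst 0 s2 p)"
          using app lam by (auto intro!: compat.base simp: R_beta_def)
        ultimately show ?thesis using t by auto
      qed
    qed
  next
    assume "R_bot bt t t'"
    then have nh: "\<not> has_hnf bt t" "t' = Cst bt" by (auto simp: R_bot_def)
    have "\<not> has_hnf bt s" using nh(1) par_bot_has_hnf[OF base(2)] by blast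
    then have "par_bot bt s t'" unfolding nh(2) by (rule par_bot_bot_case)
    then show ?thesis by blast
  qed
next
  case (appL a a' b)
  from appL(3) show ?case
  proof cases
    case rbot then show ?thesis by (simp add: R_bot_def)
  next
    case atom then show ?thesis by (auto simp: is_atom_def)
  next
    case (app s1 s2)
    have "par_bot bt s1 a" using app by simp
    then obtain s1' where s1': "s1 = s1' \<or> beta_step s1 s1'" "par_bot bt s1' a'" using appL(2) by blast
    have "par_bot bt (App s1' s2) (App a' b)" using s1'(2) app by (simp add: par_bot.app)
    moreover have "s = App s1' s2 \<or> beta_step s (App s1' s2)" using s1'(1) app compat.appL by blast
    ultimately show ?thesis by blast
  qed
next
  case (appR a a' b)
  from appR(3) show ?case
  proof cases
    case rbot then show ?thesis by (simp add: R_bot_def)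
  next
    case atom then show ?thesis by (auto simp: is_atom_def)
  next
    case (app s1 s2)
    have "par_bot bt s2 a" using app by simp
    then obtain s2' where s2': "s2 = s2' \<or> beta_step s2 s2'" "par_bot bt s2' a'" using appR(2) by blast
    have "par_bot bt (App s1 s2') (App b a')" using s2'(2) app by (simp add: par_bot.app)
    moreover have "s = App s1 s2' \<or> beta_step s (App s1 s2')" using s2'(1) app compat.appR by blast
    ultimately show ?thesis by blast
  qed
next
  case (lam a a')
  from lam(3) show ?case
  proof cases
    case rbot then show ?thesis by (simp add: R_bot_def)
  next
    case atom then show ?thesis by (auto simp: is_atom_def)
  next
    case (lam s0)
    have "par_bot bt s0 a" using lam by simp
    then obtain s0' where s0': "s0 = s0' \<or> beta_step s0 s0'" "par_bot bt s0' a'" using \<open>\<And>s. par_bot bt s a \<Longrightarrow> _\<close> by blast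
    have "par_bot bt (Lam s0') (Lam a')" using s0'(2) by (rule par_bot.lam)
    moreover have "s = Lam s0' \<or> beta_step s (Lam s0')" using s0'(1) lam compat.lam by blast
    ultimately show ?thesis by blast
  qed
qed

lemma par_bot_proj_star: "(betabot_step bt)\<^sup>*\<^sup>* t t' \<Longrightarrow> par_bot bt s t \<Longrightarrow> \<exists>s'. beta_step\<^sup>*\<^sup>* s s' \<and> par_bot bt s' t'"
proof (induction rule: rtranclp_induct)
  case base then show ?case by blast
next
  case (step y z)
  then obtain s' where s': "beta_step\<^sup>*\<^sup>* s s'" "par_bot bt s' y" by blast
  obtain s'' where s'': "s' = s'' \<or> beta_step s' s''" "par_bot bt s'' z" using par_bot_proj[OF step(2) s'(2)] by blast
  have "beta_step\<^sup>*\<^sup>* s s''" using s'(1) s''(1) by (metis rtranclp.rtrancl_into_rtrancl)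
  then show ?case using s''(2) by blast
qed


definition Inv :: "'c \<Rightarrow> 'c trm \<Rightarrow> 'c trm \<Rightarrow> bool" where
  "Inv bt w t' \<longleftrightarrow> (\<exists>t. par_bot bt w t \<and> inf_closure (betabot_step bt) t t')"

lemma par_bot_atom_inv: "par_bot bt v a \<Longrightarrow> is_atom a \<Longrightarrow> a \<noteq> Cst bt \<Longrightarrow> v = a"
  by (erule par_bot.cases) (auto simp: R_bot_def)

lemma par_bot_App_inv: "par_bot bt v (App t1 t2) \<Longrightarrow> \<exists>v1 v2. v = App v1 v2 \<and> par_bot bt v1 t1 \<and> par_bot bt v2 t2"
  by (erule par_bot.cases) (auto simp: R_bot_def)

lemma par_bot_Lam_inv: "par_bot bt v (Lam t1) \<Longrightarrow> \<exists>v1. v = Lam v1 \<and> par_bot bt v1 t1"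
  by (erule par_bot.cases) (auto simp: R_bot_def)

lemma Inv_atom: "Inv bt w a \<Longrightarrow> is_atom a \<Longrightarrow> \<exists>v. beta_step\<^sup>*\<^sup>* w v \<and> par_bot bt v a"
proof -
  assume "Inv bt w a" "is_atom a"
  then obtain t where t: "par_bot bt w t" "inf_closure (betabot_step bt) t a" unfolding Inv_def by blast
  from t(2) have "(betabot_step bt)\<^sup>*\<^sup>* t a"
    by cases (use \<open>is_atom a\<close> in simp_all)
  from par_bot_proj_star[OF this t(1)] show ?thesis .
qed

lemma Inv_App: "Inv bt w (App a b) \<Longrightarrow> \<exists>v1 v2. beta_step\<^sup>*\<^sup>* w (App v1 v2) \<and> Inv bt v1 a \<and> Inv bt v2 b"
proof -
  assume "Inv bt w (App a b)"
  then obtain t where t: "par_bot bt w t" "inf_closure (betabot_step bt) t (App a b)" unfolding Inv_def by blast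
  from t(2) obtain t1 t2 where tt: "(betabot_step bt)\<^sup>*\<^sup>* t (App t1 t2)"
    "inf_closure (betabot_step bt) t1 a" "inf_closure (betabot_step bt) t2 b"
    by cases simp_all
  obtain v where v: "beta_step\<^sup>*\<^sup>* w v" "par_bot bt v (App t1 t2)" using par_bot_proj_star[OF tt(1) t(1)] by blast
  obtain v1 v2 where vv: "v = App v1 v2" "par_bot bt v1 t1" "par_bot bt v2 t2" using par_bot_App_inv[OF v(2)] by blast
  have "Inv bt v1 a" unfolding Inv_def using vv(2) tt(2) by blast
  moreover have "Inv bt v2 b" unfolding Inv_def using vv(3) tt(3) by blast
  moreover have "beta_step\<^sup>*\<^sup>* w (App v1 v2)" using v(1) vv(1) by simp
  ultimately show ?thesis by (intro exI[of _ v1] exI[of _ v2] conjI)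
qed

lemma Inv_Lam: "Inv bt w (Lam a) \<Longrightarrow> \<exists>v. beta_step\<^sup>*\<^sup>* w (Lam v) \<and> Inv bt v a"
proof -
  assume "Inv bt w (Lam a)"
  then obtain t where t: "par_bot bt w t" "inf_closure (betabot_step bt) t (Lam a)" unfolding Inv_def by blast
  from t(2) obtain t1 where tt: "(betabot_step bt)\<^sup>*\<^sup>* t (Lam t1)"
    "inf_closure (betabot_step bt) t1 a"
    by cases simp_all
  obtain v where v: "beta_step\<^sup>*\<^sup>* w v" "par_bot bt v (Lam t1)" using par_bot_proj_star[OF tt(1) t(1)] by blast
  obtain v1 where vv: "v = Lam v1" "par_bot bt v1 t1" using par_bot_Lam_inv[OF v(2)] by blast
  have "Inv bt v1 a" unfolding Inv_def using vv(2) tt(2) by blast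
  moreover have "beta_step\<^sup>*\<^sup>* w (Lam v1)" using v(1) vv(1) by simp
  ultimately show ?thesis by (intro exI[of _ v1] conjI)
qed

definition chA :: "'c \<Rightarrow> 'c trm \<Rightarrow> 'c trm \<Rightarrow> 'c trm \<Rightarrow> 'c trm \<times> 'c trm" where
  "chA bt w a b = (SOME p. beta_step\<^sup>*\<^sup>* w (App (fst p) (snd p)) \<and> Inv bt (fst p) a \<and> Inv bt (snd p) b)"
definition chL :: "'c \<Rightarrow> 'c trm \<Rightarrow> 'c trm \<Rightarrow> 'c trm" where
  "chL bt w a = (SOME v. beta_step\<^sup>*\<^sup>* w (Lam v) \<and> Inv bt v a)"
definition chB :: "'c \<Rightarrow> 'c trm \<Rightarrow> 'c trm" where
  "chB bt w = (SOME v. beta_step\<^sup>*\<^sup>* w v \<and> par_bot bt v (Cst bt))"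

primcorec build :: "'c \<Rightarrow> 'c trm \<Rightarrow> 'c trm \<Rightarrow> 'c trm" where
  "build bt w t' = (case t' of
      Var n \<Rightarrow> Var n
    | Cst c \<Rightarrow> (if c = bt then (case chB bt w of Var m \<Rightarrow> Var m | Cst d \<Rightarrow> Cst d | App x y \<Rightarrow> App x y | Lam x \<Rightarrow> Lam x) else Cst c)
    | App a b \<Rightarrow> App (build bt (fst (chA bt w a b)) a) (build bt (snd (chA bt w a b)) b)
    | Lam a \<Rightarrow> Lam (build bt (chL bt w a) a))"

lemma build_simps:
  "build bt w (Var n) = Var n"
  "build bt w (Cst c) = (if c = bt then chB bt w else Cst c)"
  "build bt w (App a b) = App (build bt (fst (chA bt w a b)) a) (build bt (snd (chA bt w a b)) b)"
  "build bt w (Lam a) = Lam (build bt (chL bt w a) a)"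
  by (subst build.code; simp add: case_id_trm)+


lemma chA_spec: "Inv bt w (App a b) \<Longrightarrow>
  beta_step\<^sup>*\<^sup>* w (App (fst (chA bt w a b)) (snd (chA bt w a b))) \<and> Inv bt (fst (chA bt w a b)) a \<and> Inv bt (snd (chA bt w a b)) b"
proof -
  assume "Inv bt w (App a b)"
  from Inv_App[OF this] obtain v1 v2 where "beta_step\<^sup>*\<^sup>* w (App v1 v2) \<and> Inv bt v1 a \<and> Inv bt v2 b" by blast
  then have "\<exists>p. beta_step\<^sup>*\<^sup>* w (App (fst p) (snd p)) \<and> Inv bt (fst p) a \<and> Inv bt (snd p) b"
    by (intro exI[of _ "(v1, v2)"]) simp
  then show ?thesis unfolding chA_def by (rule someI_ex)
qed

lemma chL_spec: "Inv bt w (Lam a) \<Longrightarrow> beta_step\<^sup>*\<^sup>* w (Lam (chL bt w a)) \<and> Inv bt (chL bt w a) a"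
proof -
  assume "Inv bt w (Lam a)"
  from Inv_Lam[OF this] have "\<exists>v. beta_step\<^sup>*\<^sup>* w (Lam v) \<and> Inv bt v a" .
  then show ?thesis unfolding chL_def by (rule someI_ex)
qed

lemma chB_spec: "Inv bt w (Cst bt) \<Longrightarrow> beta_step\<^sup>*\<^sup>* w (chB bt w) \<and> par_bot bt (chB bt w) (Cst bt)"
proof -
  assume "Inv bt w (Cst bt)"
  from Inv_atom[OF this] have "\<exists>v. beta_step\<^sup>*\<^sup>* w v \<and> par_bot bt v (Cst bt)" by simp
  then show ?thesis unfolding chB_def by (rule someI_ex)
qed

lemma Inv_atom_nb: "Inv bt w a \<Longrightarrow> is_atom a \<Longrightarrow> a \<noteq> Cst bt \<Longrightarrow> beta_step\<^sup>*\<^sup>* w a"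
proof -
  assume "Inv bt w a" "is_atom a" "a \<noteq> Cst bt"
  from Inv_atom[OF \<open>Inv bt w a\<close> \<open>is_atom a\<close>] obtain v where v: "beta_step\<^sup>*\<^sup>* w v" "par_bot bt v a" by blast
  have "v = a" by (rule par_bot_atom_inv[OF v(2)]) fact+
  then show ?thesis using v(1) by simp
qed

lemma inf_refl: "inf_closure r s s"
proof (coinduction arbitrary: s rule: inf_closure.coinduct)
  case inf_closure
  show ?case
  proof (cases s)
    case (Var n) then show ?thesis by simp
  next
    case (Cst c) then show ?thesis by simp
  next
    case (App a b) then show ?thesis by simp (rule exI[of _ a], rule exI[of _ b], simp)
  next
    case (Lam a) then show ?thesis by simp (rule exI[of _ a], simp)
  qed
qed

lemma inf_prefix: "r\<^sup>*\<^sup>* s s' \<Longrightarrow> inf_closure r s' t \<Longrightarrow> inf_closure r s t"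
proof -
  assume a: "r\<^sup>*\<^sup>* s s'" and b: "inf_closure r s' t"
  from b show "inf_closure r s t"
  proof cases
    case (atom) then show ?thesis using a by (metis inf_closure.atom rtranclp_trans)
  next
    case (app t1 t2 t1' t2') then show ?thesis using a by (metis inf_closure.app rtranclp_trans)
  next
    case (lam r0 r') then show ?thesis using a by (metis inf_closure.lam rtranclp_trans)
  qed
qed

lemma build_inf: "Inv bt w t' \<Longrightarrow> inf_closure beta_step w (build bt w t')"
proof (coinduction arbitrary: w t' rule: inf_closure.coinduct)
  case inf_closure
  show ?case
  proof (cases t')
    case (Var n)
    then have "beta_step\<^sup>*\<^sup>* w (Var n)" using Inv_atom_nb[of bt w "Var n"] inf_closure by simp
    then show ?thesis using Var by (simp add: build_simps)
  next
    case (Cst c)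
    show ?thesis
    proof (cases "c = bt")
      case False
      then have "beta_step\<^sup>*\<^sup>* w (Cst c)" using Inv_atom_nb[of bt w "Cst c"] inf_closure Cst by simp
      then show ?thesis using Cst False by (simp add: build_simps)
    next
      case True
      have e: "build bt w t' = chB bt w" using Cst True by (simp add: build_simps)
      have sp: "beta_step\<^sup>*\<^sup>* w (chB bt w)" using chB_spec[of bt w] inf_closure Cst True by simp
      have "inf_closure beta_step w (chB bt w)" by (rule inf_prefix[OF sp inf_refl])
      then show ?thesis
      proof cases
        case atom then show ?thesis unfolding e by simp
      next
        case (app t1 t2 t1' t2')
        show ?thesis unfolding e
          apply (rule disjI2, rule disjI1)
          apply (rule exI[of _ w], rule exI[of _ t1], rule exI[of _ t2], rule exI[of _ t1'], rule exI[of _ t2'])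
          using app by simp
      next
        case (lam r r')
        show ?thesis unfolding e
          apply (rule disjI2, rule disjI2)
          apply (rule exI[of _ w], rule exI[of _ r], rule exI[of _ r'])
          using lam by simp
      qed
    qed
  next
    case (App a b)
    have sp: "beta_step\<^sup>*\<^sup>* w (App (fst (chA bt w a b)) (snd (chA bt w a b)))"
      "Inv bt (fst (chA bt w a b)) a" "Inv bt (snd (chA bt w a b)) b"
      using chA_spec[of bt w a b] inf_closure App by simp_all
    show ?thesis
      apply (rule disjI2, rule disjI1)
      apply (rule exI[of _ w], rule exI[of _ "fst (chA bt w a b)"], rule exI[of _ "snd (chA bt w a b)"])
      apply (rule exI[of _ "build bt (fst (chA bt w a b)) a"], rule exI[of _ "build bt (snd (chA bt w a b)) b"])
      apply (intro conjI)
          apply (rule refl)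
         apply (simp add: App build_simps)
        apply (rule sp(1))
       apply (rule disjI1, rule exI[of _ "fst (chA bt w a b)"], rule exI[of _ a], simp add: sp(2))
      apply (rule disjI1, rule exI[of _ "snd (chA bt w a b)"], rule exI[of _ b], simp add: sp(3))
      done
  next
    case (Lam a)
    have sp: "beta_step\<^sup>*\<^sup>* w (Lam (chL bt w a))" "Inv bt (chL bt w a) a"
      using chL_spec[of bt w a] inf_closure Lam by simp_all
    show ?thesis
      apply (rule disjI2, rule disjI2)
      apply (rule exI[of _ w], rule exI[of _ "chL bt w a"], rule exI[of _ "build bt (chL bt w a) a"])
      apply (intro conjI)
         apply (rule refl)
        apply (simp add: Lam build_simps)
       apply (rule sp(1))
      apply (rule disjI1, rule exI[of _ "chL bt w a"], rule exI[of _ a], simp add: sp(2))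
      done
  qed
qed

lemma build_par: "Inv bt w t' \<Longrightarrow> par_bot bt (build bt w t') t'"
proof (coinduction arbitrary: w t' rule: par_bot.coinduct)
  case par_bot
  show ?case
  proof (cases t')
    case (Var n)
    then show ?thesis by (simp add: build_simps)
  next
    case (Cst c)
    show ?thesis
    proof (cases "c = bt")
      case False
      then show ?thesis using Cst by (simp add: build_simps)
    next
      case True
      have e: "build bt w t' = chB bt w" using Cst True by (simp add: build_simps)
      have sp: "par_bot bt (chB bt w) (Cst bt)" using chB_spec[of bt w] par_bot Cst True by simp
      have e': "build bt w (Cst bt) = chB bt w" by (simp add: build_simps)
      from sp show ?thesis
      proof cases
        case rbot then show ?thesis unfolding Cst True e' by simp
      next
        case atom then show ?thesis unfolding Cst True e' by simp
      qed
    qed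
  next
    case (App a b)
    have sp: "Inv bt (fst (chA bt w a b)) a" "Inv bt (snd (chA bt w a b)) b"
      using chA_spec[of bt w a b] par_bot App by simp_all
    show ?thesis
      apply (rule disjI2, rule disjI2, rule disjI1)
      apply (rule exI[of _ "build bt (fst (chA bt w a b)) a"], rule exI[of _ a])
      apply (rule exI[of _ "build bt (snd (chA bt w a b)) b"], rule exI[of _ b])
      apply (intro conjI)
         apply (simp add: App build_simps)
        apply (simp add: App)
       apply (rule disjI1, rule exI[of _ "fst (chA bt w a b)"], simp add: sp(1))
      apply (rule disjI1, rule exI[of _ "snd (chA bt w a b)"], simp add: sp(2))
      done
  next
    case (Lam a)
    have sp: "Inv bt (chL bt w a) a"
      using chL_spec[of bt w a] par_bot Lam by simp_all
    show ?thesis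
      apply (rule disjI2, rule disjI2, rule disjI2)
      apply (rule exI[of _ "build bt (chL bt w a) a"], rule exI[of _ a])
      apply (intro conjI)
        apply (simp add: Lam build_simps)
       apply (simp add: Lam)
      apply (rule disjI1, rule exI[of _ "chL bt w a"], simp add: sp)
      done
  qed
qed

theorem theorem5p30:
  fixes bt :: 'c and s t :: "'c trm"
  assumes "inf_closure (betabot_step bt) s t"
  shows "\<exists>r. inf_closure beta_step s r \<and> par_bot bt r t"
proof -
  have I: "Inv bt s t" unfolding Inv_def by (rule exI[of _ s]) (simp add: par_bot_refl assms)
  show ?thesis by (rule exI[of _ "build bt s t"]) (simp add: build_inf[OF I] build_par[OF I])
qed

end
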